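(* Let $(\mathfrak{g},\mathfrak{h},J,-B)$ be a compact semisimple irreducible Hermitian symmetric pair and let $s\in\{0,1\}$ with $\dim\mathfrak{h}\equiv s\pmod 2$. Let $\mathfrak{n}(\mathfrak{g},\mathfrak{h})=\mathfrak{h}\oplus\mathfrak{m}$ with bracket $[z+x,z'+x']_{\mathfrak{n}}=[x,x']$ ($z,z'\in\mathfrak{h}$, $x,x'\in\mathfrak{m}$, $[\cdot,\cdot]$ the bracket of $\mathfrak{g}$), and endow $\mathbb{R}^s\oplus\mathfrak{n}(\mathfrak{g},\mathfrak{h})$ (with $\mathbb{R}^s$ central) with the inner product $\langle\cdot,\cdot\rangle$ equal to $-B$ on $\mathfrak{g}$ and making $\mathbb{R}^s$ a unit-length factor orthogonal to $\mathfrak{g}$. Then $\mathbb{R}^s\oplus\mathfrak{n}(\mathfrak{g},\mathfrak{h})$ admits an abelian complex structure with respect to which $\langle\cdot,\cdot\rangle$ is Hermitian and pluriclosed; explicitly, any $\mathbb{J}$ with $\mathbb{J}|_{\mathfrak{m}}=J$ and $\mathbb{J}|_{\mathbb{R}^s\oplus\mathfrak{h}}$ an orthogonal map squaring to $-I$ works. Moreover, the corresponding left-invariant metric on $\mathbb{R}^s\times N(\mathfrak{g},\mathfrak{h})$, where $N(\mathfrak{g},\mathfrak{h})$ is the simply connected Lie group with Lie algebra $\mathfrak{n}(\mathfrak{g},\mathfrak{h})$, is naturally reductive.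
   Context: $B$ is the Killing form of the compact semisimple Lie algebra $\mathfrak{g}$; $\mathfrak{h}\subset\mathfrak{g}$ is a subalgebra and $\mathfrak{m}$ its $B$-orthogonal complement with $[\mathfrak{h},\mathfrak{m}]\subset\mathfrak{m}$, $[\mathfrak{m},\mathfrak{m}]\subset\mathfrak{h}$ (symmetric pair), and the pair is irreducible if $\operatorname{ad}(\mathfrak{h})$ acts irreducibly on $\mathfrak{m}$. Hermitian: $J:\mathfrak{m}\to\mathfrak{m}$ is $B$-orthogonal with $J^2=-I$, and its extension to $\mathfrak{g}$ by $J|_{\mathfrak{h}}=0$ satisfies $J[x,y]=[x,Jy]$ for $x\in\mathfrak{h}$, $y\in\mathfrak{m}$, and $N_J(x,y)\in\mathfrak{h}$ for $x,y\in\mathfrak{g}$. A complex structure $\mathbb{J}$ is abelian if $[\mathbb{J}x,\mathbb{J}y]=[x,y]$ for all $x,y$. Torsion 3-form: $c(x,y,z)=-\langle[\mathbb{J}x,\mathbb{J}y],z\rangle-\langle[\mathbb{J}y,\mathbb{J}z],x\rangle-\langle[\mathbb{J}z,\mathbb{J}x],y\rangle$; pluriclosed means $dc=0$ for the Chevalley–Eilenberg differential. *)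

theory Defs
  imports "HOL-Analysis.Analysis"
begin

(* A finite-dimensional real Lie algebra is modelled on a euclidean_space type 'g
   (only its real vector space structure and a basis are used; its inner product
   plays no role except to compute traces, which are basis independent). *)

definition lie_algebra :: "('g::euclidean_space \<Rightarrow> 'g \<Rightarrow> 'g) \<Rightarrow> bool" where
  "lie_algebra br \<longleftrightarrow> bilinear br \<and> (\<forall>x. br x x = 0) \<and>
     (\<forall>x y z. br x (br y z) + br y (br z x) + br z (br x y) = 0)"

definition lin_trace :: "('a::euclidean_space \<Rightarrow> 'a) \<Rightarrow> real" where
  "lin_trace f = (\<Sum>b\<in>Basis. inner (f b) b)"

definition killing :: "('g::euclidean_space \<Rightarrow> 'g \<Rightarrow> 'g) \<Rightarrow> 'g \<Rightarrow> 'g \<Rightarrow> real" where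
  "killing br x y = lin_trace (\<lambda>z. br x (br y z))"

definition compact_semisimple :: "('g::euclidean_space \<Rightarrow> 'g \<Rightarrow> 'g) \<Rightarrow> bool" where
  "compact_semisimple br \<longleftrightarrow> lie_algebra br \<and> (\<forall>x. x \<noteq> 0 \<longrightarrow> killing br x x < 0)"

definition m_of :: "('g::euclidean_space \<Rightarrow> 'g \<Rightarrow> 'g) \<Rightarrow> 'g set \<Rightarrow> 'g set" where
  "m_of br h = {x. \<forall>z\<in>h. killing br x z = 0}"

definition symmetric_pair :: "('g::euclidean_space \<Rightarrow> 'g \<Rightarrow> 'g) \<Rightarrow> 'g set \<Rightarrow> bool" where
  "symmetric_pair br h \<longleftrightarrow> subspace h \<and> (\<forall>z\<in>h. \<forall>z'\<in>h. br z z' \<in> h) \<and>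
     (\<forall>z\<in>h. \<forall>x\<in>m_of br h. br z x \<in> m_of br h) \<and>
     (\<forall>x\<in>m_of br h. \<forall>y\<in>m_of br h. br x y \<in> h)"

definition irreducible_pair :: "('g::euclidean_space \<Rightarrow> 'g \<Rightarrow> 'g) \<Rightarrow> 'g set \<Rightarrow> bool" where
  "irreducible_pair br h \<longleftrightarrow>
     (\<forall>W. subspace W \<and> W \<subseteq> m_of br h \<and> (\<forall>z\<in>h. \<forall>x\<in>W. br z x \<in> W)
           \<longrightarrow> W = {0} \<or> W = m_of br h)"

definition nijenhuis :: "('a \<Rightarrow> 'a \<Rightarrow> 'a::real_vector) \<Rightarrow> ('a \<Rightarrow> 'a) \<Rightarrow> 'a \<Rightarrow> 'a \<Rightarrow> 'a" where
  "nijenhuis br J x y = br (J x) (J y) - J (br (J x) y) - J (br x (J y)) - br x y"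

definition hermitian_symmetric_pair ::
  "('g::euclidean_space \<Rightarrow> 'g \<Rightarrow> 'g) \<Rightarrow> 'g set \<Rightarrow> ('g \<Rightarrow> 'g) \<Rightarrow> bool" where
  "hermitian_symmetric_pair br h J \<longleftrightarrow> symmetric_pair br h \<and> linear J \<and>
     (\<forall>z\<in>h. J z = 0) \<and>
     (\<forall>x\<in>m_of br h. J x \<in> m_of br h \<and> J (J x) = - x) \<and>
     (\<forall>x\<in>m_of br h. \<forall>y\<in>m_of br h. killing br (J x) (J y) = killing br x y) \<and>
     (\<forall>x\<in>h. \<forall>y\<in>m_of br h. J (br x y) = br x (J y)) \<and>
     (\<forall>x y. nijenhuis br J x y \<in> h)"

definition proj_m :: "('g::euclidean_space \<Rightarrow> 'g \<Rightarrow> 'g) \<Rightarrow> 'g set \<Rightarrow> 'g \<Rightarrow> 'g" where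
  "proj_m br h v = (THE x. x \<in> m_of br h \<and> v - x \<in> h)"

(* R^s + n(g,h), realised inside real \<times> 'g *)
definition Vs :: "nat \<Rightarrow> (real \<times> 'g::euclidean_space) set" where
  "Vs s = {u. s = 0 \<longrightarrow> fst u = 0}"

definition Hs :: "'g::euclidean_space set \<Rightarrow> nat \<Rightarrow> (real \<times> 'g) set" where
  "Hs h s = {u \<in> Vs s. snd u \<in> h}"

definition nbr :: "('g::euclidean_space \<Rightarrow> 'g \<Rightarrow> 'g) \<Rightarrow> 'g set \<Rightarrow> real \<times> 'g \<Rightarrow> real \<times> 'g \<Rightarrow> real \<times> 'g" where
  "nbr br h u w = (0, br (proj_m br h (snd u)) (proj_m br h (snd w)))"

definition nip :: "('g::euclidean_space \<Rightarrow> 'g \<Rightarrow> 'g) \<Rightarrow> real \<times> 'g \<Rightarrow> real \<times> 'g \<Rightarrow> real" where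
  "nip br u w = fst u * fst w - killing br (snd u) (snd w)"

definition adapted_cs ::
  "('g::euclidean_space \<Rightarrow> 'g \<Rightarrow> 'g) \<Rightarrow> 'g set \<Rightarrow> ('g \<Rightarrow> 'g) \<Rightarrow> nat \<Rightarrow> (real \<times> 'g \<Rightarrow> real \<times> 'g) \<Rightarrow> bool" where
  "adapted_cs br h J s Jc \<longleftrightarrow> linear Jc \<and>
     (\<forall>x\<in>m_of br h. Jc (0, x) = (0, J x)) \<and>
     (\<forall>u\<in>Hs h s. Jc u \<in> Hs h s \<and> Jc (Jc u) = - u) \<and>
     (\<forall>u\<in>Hs h s. \<forall>w\<in>Hs h s. nip br (Jc u) (Jc w) = nip br u w)"

definition complex_structure :: "'a set \<Rightarrow> ('a \<Rightarrow> 'a \<Rightarrow> 'a::real_vector) \<Rightarrow> ('a \<Rightarrow> 'a) \<Rightarrow> bool" where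
  "complex_structure V br Jc \<longleftrightarrow> linear Jc \<and> (\<forall>u\<in>V. Jc u \<in> V \<and> Jc (Jc u) = - u) \<and>
     (\<forall>u\<in>V. \<forall>w\<in>V. nijenhuis br Jc u w = 0)"

definition abelian_cs :: "'a set \<Rightarrow> ('a \<Rightarrow> 'a \<Rightarrow> 'a::real_vector) \<Rightarrow> ('a \<Rightarrow> 'a) \<Rightarrow> bool" where
  "abelian_cs V br Jc \<longleftrightarrow> complex_structure V br Jc \<and>
     (\<forall>u\<in>V. \<forall>w\<in>V. br (Jc u) (Jc w) = br u w)"

definition hermitian_metric :: "'a set \<Rightarrow> ('a \<Rightarrow> 'a \<Rightarrow> real) \<Rightarrow> ('a \<Rightarrow> 'a) \<Rightarrow> bool" where
  "hermitian_metric V ip Jc \<longleftrightarrow> (\<forall>u\<in>V. \<forall>w\<in>V. ip (Jc u) (Jc w) = ip u w)"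

definition torsion3 :: "('a \<Rightarrow> 'a \<Rightarrow> 'a) \<Rightarrow> ('a \<Rightarrow> 'a \<Rightarrow> real) \<Rightarrow> ('a \<Rightarrow> 'a) \<Rightarrow> 'a \<Rightarrow> 'a \<Rightarrow> 'a \<Rightarrow> real" where
  "torsion3 br ip Jc x y z =
     - ip (br (Jc x) (Jc y)) z - ip (br (Jc y) (Jc z)) x - ip (br (Jc z) (Jc x)) y"

(* Chevalley--Eilenberg differential of a 3-form (trivial coefficients) *)
definition ce_d3 :: "('a \<Rightarrow> 'a \<Rightarrow> 'a) \<Rightarrow> ('a \<Rightarrow> 'a \<Rightarrow> 'a \<Rightarrow> real) \<Rightarrow> 'a \<Rightarrow> 'a \<Rightarrow> 'a \<Rightarrow> 'a \<Rightarrow> real" where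
  "ce_d3 br c x0 x1 x2 x3 =
     - c (br x0 x1) x2 x3 + c (br x0 x2) x1 x3 - c (br x0 x3) x1 x2
     - c (br x1 x2) x0 x3 + c (br x1 x3) x0 x2 - c (br x2 x3) x0 x1"

definition pluriclosed :: "'a set \<Rightarrow> ('a \<Rightarrow> 'a \<Rightarrow> 'a) \<Rightarrow> ('a \<Rightarrow> 'a \<Rightarrow> real) \<Rightarrow> ('a \<Rightarrow> 'a) \<Rightarrow> bool" where
  "pluriclosed V br ip Jc \<longleftrightarrow>
     (\<forall>x0\<in>V. \<forall>x1\<in>V. \<forall>x2\<in>V. \<forall>x3\<in>V. ce_d3 br (torsion3 br ip Jc) x0 x1 x2 x3 = 0)"

definition skew_derivation :: "'a set \<Rightarrow> ('a \<Rightarrow> 'a \<Rightarrow> 'a::real_vector) \<Rightarrow> ('a \<Rightarrow> 'a \<Rightarrow> real) \<Rightarrow> ('a \<Rightarrow> 'a) \<Rightarrow> bool" where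
  "skew_derivation V br ip D \<longleftrightarrow> linear D \<and> (\<forall>u\<in>V. D u \<in> V) \<and>
     (\<forall>u\<in>V. \<forall>w\<in>V. D (br u w) = br (D u) w + br u (D w)) \<and>
     (\<forall>u\<in>V. \<forall>w\<in>V. ip (D u) w + ip u (D w) = 0)"

(* Natural reductivity of the left-invariant metric on the simply connected Lie group
   with metric Lie algebra (V, br, ip), with respect to a transitive isometry group K \<ltimes> N
   (K a connected group of isometric automorphisms, Lie algebra k of skew derivations).
   The reductive complement p of k in k \<ltimes> V is the graph {(phi X, X)} of a linear
   map phi : V \<rightarrow> k; Ad(K)-invariance of p is the equivariance of phi, and
   [ (phi X, X), (phi Y, Y) ]_p corresponds to phi X Y - phi Y X + [X,Y]. *)
definition naturally_reductive :: "'a set \<Rightarrow> ('a \<Rightarrow> 'a \<Rightarrow> 'a::real_vector) \<Rightarrow> ('a \<Rightarrow> 'a \<Rightarrow> real) \<Rightarrow> bool" where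
  "naturally_reductive V br ip \<longleftrightarrow>
    (\<exists>(K :: ('a \<Rightarrow> 'a) set) (\<phi> :: 'a \<Rightarrow> 'a \<Rightarrow> 'a).
       (\<forall>D\<in>K. skew_derivation V br ip D) \<and>
       (\<exists>F\<in>K. \<forall>u\<in>V. F u = 0) \<and>
       (\<forall>D\<in>K. \<forall>E\<in>K. \<forall>c::real. \<exists>F\<in>K. \<forall>u\<in>V. F u = c *\<^sub>R D u + E u) \<and>
       (\<forall>D\<in>K. \<forall>E\<in>K. \<exists>F\<in>K. \<forall>u\<in>V. F u = D (E u) - E (D u)) \<and>
       (\<forall>X\<in>V. \<phi> X \<in> K) \<and>
       (\<forall>X\<in>V. \<forall>Y\<in>V. \<forall>c::real. \<forall>u\<in>V. \<phi> (c *\<^sub>R X + Y) u = c *\<^sub>R \<phi> X u + \<phi> Y u) \<and>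
       (\<forall>D\<in>K. \<forall>X\<in>V. \<forall>u\<in>V. D (\<phi> X u) - \<phi> X (D u) = \<phi> (D X) u) \<and>
       (\<forall>X\<in>V. \<forall>Y\<in>V. \<forall>Z\<in>V.
          ip (\<phi> X Y - \<phi> Y X + br X Y) Z + ip Y (\<phi> X Z - \<phi> Z X + br X Z) = 0))"

end

theory Submission
  imports Defs
begin


lemma lie_bil: "lie_algebra br \<Longrightarrow> bilinear br"
  by (simp add: lie_algebra_def)

lemma lie_skew:
  assumes "lie_algebra br" shows "br x y = - br y x"
proof -
  have b: "bilinear br" using assms lie_bil by blast
  have "0 = br (x+y) (x+y)" using assms by (simp add: lie_algebra_def)
  also have "\<dots> = br x x + br x y + br y x + br y y"
    by (simp add: bilinear_ladd[OF b] bilinear_radd[OF b])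
  also have "\<dots> = br x y + br y x" using assms by (simp add: lie_algebra_def)
  finally show ?thesis by (simp add: eq_neg_iff_add_eq_0)
qed

lemma lie_ad:
  assumes "lie_algebra br" shows "br (br a b) z = br a (br b z) - br b (br a z)"
proof -
  have j: "br a (br b z) + br b (br z a) + br z (br a b) = 0"
    using assms by (simp add: lie_algebra_def)
  have b: "bilinear br" using assms lie_bil by blast
  have "br z a = - br a z" using lie_skew[OF assms] .
  hence "br b (br z a) = - br b (br a z)" by (simp add: bilinear_rneg[OF b])
  moreover have "br z (br a b) = - br (br a b) z" using lie_skew[OF assms] .
  ultimately show ?thesis using j by (simp add: algebra_simps)
qed

lemma trace_expand:
  fixes A B :: "'a::euclidean_space \<Rightarrow> 'a"
  assumes "linear A"
  shows "lin_trace (\<lambda>x. A (B x)) = (\<Sum>b\<in>Basis. \<Sum>c\<in>Basis. inner (B b) c * inner (A c) b)"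
proof -
  have "A (B b) = (\<Sum>c\<in>Basis. inner (B b) c *\<^sub>R A c)" for b
  proof -
    have "A (B b) = A (\<Sum>c\<in>Basis. inner (B b) c *\<^sub>R c)"
      by (simp add: euclidean_representation)
    also have "\<dots> = (\<Sum>c\<in>Basis. inner (B b) c *\<^sub>R A c)"
      by (simp add: linear_sum[OF assms] linear_scale[OF assms])
    finally show ?thesis .
  qed
  thus ?thesis unfolding lin_trace_def
    by (simp add: inner_sum_left)
qed

lemma trace_comm:
  fixes A B :: "'a::euclidean_space \<Rightarrow> 'a"
  assumes "linear A" "linear B"
  shows "lin_trace (\<lambda>x. A (B x)) = lin_trace (\<lambda>x. B (A x))"
  unfolding trace_expand[OF assms(1)] trace_expand[OF assms(2)]
  by (subst sum.swap) (simp add: mult.commute)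

lemma trace_diff:
  "lin_trace (\<lambda>x. f x - g x) = lin_trace f - lin_trace g"
  unfolding lin_trace_def by (simp add: inner_diff_left sum_subtractf)

lemma lin_br:
  assumes "lie_algebra br" shows "linear (br a)" "linear (\<lambda>x. br x b)"
  using lie_bil[OF assms] unfolding bilinear_def by auto

lemma killing_sym:
  assumes "lie_algebra br" shows "killing br x y = killing br y x"
  unfolding killing_def using trace_comm[OF lin_br(1)[OF assms] lin_br(1)[OF assms]] .

lemma killing_bil:
  assumes "lie_algebra br" shows "bilinear (killing br)"
proof -
  have b: "bilinear br" using lie_bil[OF assms] .
  show ?thesis
    unfolding bilinear_def linear_iff killing_def lin_trace_def
    by (simp add: bilinear_ladd[OF b] bilinear_radd[OF b] bilinear_lmul[OF b] bilinear_rmul[OF b]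
        inner_add_left sum.distrib sum_distrib_left)
qed

lemma killing_inv:
  assumes "lie_algebra br" shows "killing br (br a b) c = killing br a (br b c)"
proof -
  have b: "bilinear br" using lie_bil[OF assms] .
  have L: "killing br (br a b) c = lin_trace (\<lambda>z. br a (br b (br c z))) - lin_trace (\<lambda>z. br b (br a (br c z)))"
    unfolding killing_def lie_ad[OF assms] by (rule trace_diff)
  have "killing br a (br b c) = lin_trace (\<lambda>z. br a (br b (br c z)) - br a (br c (br b z)))"
    unfolding killing_def lie_ad[OF assms] by (simp add: bilinear_rsub[OF b])
  also have "\<dots> = lin_trace (\<lambda>z. br a (br b (br c z))) - lin_trace (\<lambda>z. br a (br c (br b z)))"
    by (rule trace_diff)
  finally have R: "killing br a (br b c) = \<dots>" .
  have lc: "linear (\<lambda>z. br a (br c z))"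
    using lin_br(1)[OF assms] linear_compose[of "br c" "br a"] by (simp add: o_def)
  have "lin_trace (\<lambda>z. br b (br a (br c z))) = lin_trace (\<lambda>z. br a (br c (br b z)))"
    using trace_comm[OF lin_br(1)[OF assms, of b] lc] .
  thus ?thesis using L R by simp
qed



definition posdef :: "('a::euclidean_space \<Rightarrow> 'a \<Rightarrow> real) \<Rightarrow> 'a set \<Rightarrow> bool" where
  "posdef q W \<longleftrightarrow> bilinear q \<and> (\<forall>x y. q x y = q y x) \<and> (\<forall>x\<in>W. x \<noteq> 0 \<longrightarrow> q x x > 0)"

lemma gs_step:
  fixes q :: "'a::euclidean_space \<Rightarrow> 'a \<Rightarrow> real"
  assumes pd: "posdef q W" and W: "subspace W" and d: "dim W = Suc n"
  shows "\<exists>e\<in>W. q e e = 1 \<and> subspace {x\<in>W. q e x = 0} \<and> dim {x\<in>W. q e x = 0} = n"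
proof -
  have b: "bilinear q" and sy: "\<And>x y. q x y = q y x" and p: "\<And>x. x\<in>W \<Longrightarrow> x \<noteq> 0 \<Longrightarrow> q x x > 0"
    using pd by (auto simp: posdef_def)
  have "\<not> W \<subseteq> {0}" using d by (metis dim_eq_0 nat.distinct(1))
  then obtain w where w: "w \<in> W" "w \<noteq> 0" by blast
  have qw: "q w w > 0" using p w by blast
  define e where "e = (1 / sqrt (q w w)) *\<^sub>R w"
  have eW: "e \<in> W" unfolding e_def using W w by (simp add: subspace_scale)
  have ee: "q e e = 1" unfolding e_def using qw
    by (simp add: bilinear_lmul[OF b] bilinear_rmul[OF b] real_sqrt_mult[symmetric])
  define W' where "W' = {x\<in>W. q e x = 0}"
  have sW': "subspace W'" unfolding W'_def subspace_def using W
    by (simp add: subspace_def bilinear_rzero[OF b] bilinear_radd[OF b] bilinear_rmul[OF b])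
  have "W = span (insert e W')"
  proof
    show "W \<subseteq> span (insert e W')"
    proof
      fix x assume x: "x \<in> W"
      have "x - q e x *\<^sub>R e \<in> W'" unfolding W'_def using x eW W ee
        by (simp add: subspace_diff subspace_scale bilinear_rsub[OF b] bilinear_rmul[OF b])
      hence "x - q e x *\<^sub>R e \<in> span (insert e W')" by (simp add: span_base)
      moreover have "q e x *\<^sub>R e \<in> span (insert e W')" by (simp add: span_base span_scale)
      ultimately have "(x - q e x *\<^sub>R e) + q e x *\<^sub>R e \<in> span (insert e W')" by (rule span_add)
      thus "x \<in> span (insert e W')" by simp
    qed
    show "span (insert e W') \<subseteq> W"
      by (rule span_minimal) (use eW W in \<open>auto simp: W'_def\<close>)
  qed
  hence dW: "dim W = dim (insert e W')" by (metis dim_span)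
  have sp: "span W' = W'" using sW' by (metis span_eq_iff)
  have "e \<notin> W'" using ee by (simp add: W'_def)
  hence "e \<notin> span W'" unfolding sp .
  with dW have "dim W = dim W' + 1" by (simp add: dim_insert)
  hence "dim W' = n" using d by simp
  thus ?thesis using eW ee sW' W'_def by blast
qed

lemma gs:
  fixes q :: "'a::euclidean_space \<Rightarrow> 'a \<Rightarrow> real"
  assumes pd: "posdef q W'"
  shows "subspace W \<Longrightarrow> W \<subseteq> W' \<Longrightarrow> dim W = n \<Longrightarrow> \<exists>e. (\<forall>i<n. e i \<in> W) \<and>
     (\<forall>i<n. \<forall>j<n. q (e i) (e j) = (if i = j then 1 else 0)) \<and>
     (\<forall>x\<in>W. x = (\<Sum>i<n. q x (e i) *\<^sub>R e i))"
proof (induction n arbitrary: W)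
  case 0
  then show ?case by auto
next
  case (Suc n)
  have b: "bilinear q" and sy: "\<And>x y. q x y = q y x"
    using pd by (auto simp: posdef_def)
  have pdW: "posdef q W" using pd Suc.prems by (auto simp: posdef_def)
  obtain e0 where e0: "e0 \<in> W" "q e0 e0 = 1" "subspace {x\<in>W. q e0 x = 0}" "dim {x\<in>W. q e0 x = 0} = n"
    using gs_step[OF pdW Suc.prems(1) Suc.prems(3)] by blast
  obtain e' where e': "\<forall>i<n. e' i \<in> {x\<in>W. q e0 x = 0}"
     "\<forall>i<n. \<forall>j<n. q (e' i) (e' j) = (if i = j then 1 else 0)"
     "\<forall>x\<in>{x\<in>W. q e0 x = 0}. x = (\<Sum>i<n. q x (e' i) *\<^sub>R e' i)"
    using Suc.IH[OF e0(3) _ e0(4)] Suc.prems(2) by blast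
  define e where "e = (\<lambda>i. case i of 0 \<Rightarrow> e0 | Suc j \<Rightarrow> e' j)"
  have "\<forall>i<Suc n. e i \<in> W" using e0 e'(1) by (auto simp: e_def split: nat.split)
  moreover have "\<forall>i<Suc n. \<forall>j<Suc n. q (e i) (e j) = (if i = j then 1 else 0)"
    using e0 e'(1,2) sy by (auto simp: e_def split: nat.split)
  moreover have "\<forall>x\<in>W. x = (\<Sum>i<Suc n. q x (e i) *\<^sub>R e i)"
  proof
    fix x assume x: "x \<in> W"
    define x' where "x' = x - q x e0 *\<^sub>R e0"
    have x'W: "x' \<in> {x\<in>W. q e0 x = 0}" unfolding x'_def using x e0 Suc.prems(1)
      by (simp add: subspace_diff subspace_scale bilinear_rsub[OF b] bilinear_rmul[OF b] sy)
    have c: "q x' (e' i) = q x (e' i)" if "i < n" for i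
      using e'(1) that unfolding x'_def by (simp add: bilinear_lsub[OF b] bilinear_lmul[OF b])
    have "x = q x e0 *\<^sub>R e0 + x'" unfolding x'_def by simp
    also have "x' = (\<Sum>i<n. q x' (e' i) *\<^sub>R e' i)" using e'(3) x'W by blast
    also have "\<dots> = (\<Sum>i<n. q x (e' i) *\<^sub>R e' i)" by (rule sum.cong) (simp_all add: c)
    finally show "x = (\<Sum>i<Suc n. q x (e i) *\<^sub>R e i)"
      by (subst sum.lessThan_Suc_shift) (simp add: e_def)
  qed
  ultimately show ?case by blast
qed

lemma sum_pairs: "(\<Sum>j<2*(k::nat). f j) = (\<Sum>i<k. f (2*i) + f (2*i+1))"
  by (induction k) (simp_all add: algebra_simps)

lemma complex_str:
  fixes q :: "'a::euclidean_space \<Rightarrow> 'a \<Rightarrow> real"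
  assumes pd: "posdef q W" and W: "subspace W" and d: "dim W = 2 * k"
  shows "\<exists>L. linear L \<and> (\<forall>x. L x \<in> W) \<and> (\<forall>x\<in>W. L (L x) = - x) \<and>
            (\<forall>x\<in>W. \<forall>y\<in>W. q (L x) (L y) = q x y)"
proof -
  have b: "bilinear q" and sy: "\<And>x y. q x y = q y x"
    using pd by (auto simp: posdef_def)
  obtain e where e: "\<forall>i<2*k. e i \<in> W"
     "\<forall>i<2*k. \<forall>j<2*k. q (e i) (e j) = (if i = j then 1 else 0)"
     "\<forall>x\<in>W. x = (\<Sum>i<2*k. q x (e i) *\<^sub>R e i)"
    using gs[OF pd W order_refl d] by blast
  define a where "a = (\<lambda>i. e (2*i))"
  define c where "c = (\<lambda>i. e (2*i+1))"
  have aW: "a i \<in> W" "c i \<in> W" if "i < k" for i using e(1) that by (auto simp: a_def c_def)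
  have aa: "q (a i) (a j) = (if i = j then 1 else 0)" if "i<k" "j<k" for i j
    using e(2) that by (auto simp: a_def)
  have cc: "q (c i) (c j) = (if i = j then 1 else 0)" if "i<k" "j<k" for i j
    using e(2) that by (auto simp: c_def)
  have ac: "q (a i) (c j) = 0" if "i<k" "j<k" for i j
  proof -
    have "2*i \<noteq> 2*j+1" by presburger
    thus ?thesis using e(2)[rule_format, of "2*i" "2*j+1"] that by (auto simp: a_def c_def)
  qed
  have ca: "q (c i) (a j) = 0" if "i<k" "j<k" for i j using ac[OF that(2,1)] sy by simp
  have exp: "x = (\<Sum>i<k. q x (a i) *\<^sub>R a i + q x (c i) *\<^sub>R c i)" if "x \<in> W" for x
    using e(3) that unfolding sum_pairs a_def c_def by auto
  define L where "L = (\<lambda>x. \<Sum>i<k. q x (a i) *\<^sub>R c i - q x (c i) *\<^sub>R a i)"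
  have lin: "linear L" unfolding L_def linear_iff
  proof (intro conjI allI)
    fix x y
    show "(\<Sum>i<k. q (x + y) (a i) *\<^sub>R c i - q (x + y) (c i) *\<^sub>R a i) =
       (\<Sum>i<k. q x (a i) *\<^sub>R c i - q x (c i) *\<^sub>R a i) + (\<Sum>i<k. q y (a i) *\<^sub>R c i - q y (c i) *\<^sub>R a i)"
      unfolding sum.distrib[symmetric] by (rule sum.cong) (simp_all add: bilinear_ladd[OF b] algebra_simps)
  next
    fix r x
    show "(\<Sum>i<k. q (r *\<^sub>R x) (a i) *\<^sub>R c i - q (r *\<^sub>R x) (c i) *\<^sub>R a i) =
       r *\<^sub>R (\<Sum>i<k. q x (a i) *\<^sub>R c i - q x (c i) *\<^sub>R a i)"
      unfolding scaleR_sum_right by (rule sum.cong) (simp_all add: bilinear_lmul[OF b] algebra_simps)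
  qed
  have LW: "L x \<in> W" for x unfolding L_def
    by (rule subspace_sum[OF W]) (simp add: aW W subspace_diff subspace_scale)
  have lq: "linear (\<lambda>x. q x y)" and rq: "linear (q x)" for x y using b unfolding bilinear_def by auto
  have skew: "q (L x) y = - q x (L y)" for x y
    unfolding L_def
    by (simp add: linear_sum[OF lq] linear_sum[OF rq] bilinear_lsub[OF b] bilinear_rsub[OF b] bilinear_lmul[OF b]
          bilinear_rmul[OF b] sum_negf[symmetric] sy algebra_simps sum_subtractf)
  have La: "L (a j) = c j" if "j < k" for j
  proof -
    have "L (a j) = (\<Sum>i<k. (if j = i then c i else 0))"
      unfolding L_def by (rule sum.cong) (use that aa ac in auto)
    thus ?thesis using that by simp
  qed
  have Lc: "L (c j) = - a j" if "j < k" for j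
  proof -
    have "L (c j) = (\<Sum>i<k. (if j = i then - a i else 0))"
      unfolding L_def by (rule sum.cong) (use that cc ca in auto)
    thus ?thesis using that by simp
  qed
  have LL: "L (L x) = - x" if "x \<in> W" for x
  proof -
    have "L (L x) = (\<Sum>i<k. q (L x) (a i) *\<^sub>R c i - q (L x) (c i) *\<^sub>R a i)" unfolding L_def ..
    also have "\<dots> = (\<Sum>i<k. - (q x (a i) *\<^sub>R a i + q x (c i) *\<^sub>R c i))"
      by (rule sum.cong) (simp_all add: skew La Lc bilinear_rneg[OF b] algebra_simps)
    also have "\<dots> = - x" using exp[OF that] sum_negf by metis
    finally show ?thesis .
  qed
  have "q (L x) (L y) = q x y" if "x \<in> W" "y \<in> W" for x y
    using skew[of x "L y"] LL[OF that(2)] by (simp add: bilinear_rneg[OF b])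
  thus ?thesis using lin LW LL by blast
qed



context
  fixes br :: "'g::euclidean_space \<Rightarrow> 'g \<Rightarrow> 'g" and h :: "'g set" and J :: "'g \<Rightarrow> 'g"
  assumes cs: "compact_semisimple br" and hp: "hermitian_symmetric_pair br h J"
begin

lemma la: "lie_algebra br" using cs by (simp add: compact_semisimple_def)
lemma bb: "bilinear br" using lie_bil[OF la] .
lemma kb: "bilinear (killing br)" using killing_bil[OF la] .
lemma ks: "killing br x y = killing br y x" using killing_sym[OF la] .
lemma ki: "killing br (br a b) c = killing br a (br b c)" using killing_inv[OF la] .
lemma kneg: "x \<noteq> 0 \<Longrightarrow> killing br x x < 0" using cs by (simp add: compact_semisimple_def)
lemma sk: "br x y = - br y x" using lie_skew[OF la] .
lemma ad: "br (br a b) z = br a (br b z) - br b (br a z)" using lie_ad[OF la] .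

lemma sp: "symmetric_pair br h" using hp by (simp add: hermitian_symmetric_pair_def)
lemma hsub: "subspace h" using sp by (simp add: symmetric_pair_def)
lemma hh: "z \<in> h \<Longrightarrow> z' \<in> h \<Longrightarrow> br z z' \<in> h" using sp by (simp add: symmetric_pair_def)
lemma hm: "z \<in> h \<Longrightarrow> x \<in> m_of br h \<Longrightarrow> br z x \<in> m_of br h" using sp by (simp add: symmetric_pair_def)
lemma mm: "x \<in> m_of br h \<Longrightarrow> y \<in> m_of br h \<Longrightarrow> br x y \<in> h" using sp by (simp add: symmetric_pair_def)
lemma Jlin: "linear J" using hp by (simp add: hermitian_symmetric_pair_def)
lemma Jh: "z \<in> h \<Longrightarrow> J z = 0" using hp by (simp add: hermitian_symmetric_pair_def)
lemma Jm: "x \<in> m_of br h \<Longrightarrow> J x \<in> m_of br h" using hp by (simp add: hermitian_symmetric_pair_def)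
lemma JJ: "x \<in> m_of br h \<Longrightarrow> J (J x) = - x" using hp by (simp add: hermitian_symmetric_pair_def)
lemma Jorth: "x \<in> m_of br h \<Longrightarrow> y \<in> m_of br h \<Longrightarrow> killing br (J x) (J y) = killing br x y"
  using hp by (simp add: hermitian_symmetric_pair_def)
lemma Jcomm: "x \<in> h \<Longrightarrow> y \<in> m_of br h \<Longrightarrow> J (br x y) = br x (J y)"
  using hp by (simp add: hermitian_symmetric_pair_def)

lemma mdef: "x \<in> m_of br h \<Longrightarrow> z \<in> h \<Longrightarrow> killing br x z = 0" by (simp add: m_of_def)
lemma mdef': "x \<in> m_of br h \<Longrightarrow> z \<in> h \<Longrightarrow> killing br z x = 0" using mdef ks by metis

lemma msub: "subspace (m_of br h)"
  unfolding subspace_def m_of_def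
  by (simp add: bilinear_lzero[OF kb] bilinear_ladd[OF kb] bilinear_lmul[OF kb])

lemma hm0: "x \<in> h \<Longrightarrow> x \<in> m_of br h \<Longrightarrow> x = 0"
  using kneg mdef by fastforce

lemma pd: "posdef (\<lambda>x y. - killing br x y) W"
proof -
  have "bilinear (\<lambda>x y. - killing br x y)"
    using kb unfolding bilinear_def linear_iff by simp
  thus ?thesis unfolding posdef_def using ks kneg by force
qed

definition Ph :: "'g \<Rightarrow> 'g" where
  "Ph = (SOME P. linear P \<and> (\<forall>v. P v \<in> h \<and> v - P v \<in> m_of br h))"

lemma Ph_ex: "\<exists>P. linear P \<and> (\<forall>v. P v \<in> h \<and> v - P v \<in> m_of br h)"
proof -
  let ?q = "\<lambda>x y. - killing br x y"
  obtain e where e: "\<forall>i<dim h. e i \<in> h"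
     "\<forall>i<dim h. \<forall>j<dim h. ?q (e i) (e j) = (if i = j then 1 else 0)"
     "\<forall>x\<in>h. x = (\<Sum>i<dim h. ?q x (e i) *\<^sub>R e i)"
    using gs[OF pd hsub order_refl refl] by blast
  define P where "P = (\<lambda>v. \<Sum>i<dim h. ?q v (e i) *\<^sub>R e i)"
  have lq: "linear (\<lambda>x. killing br x y)" and rq: "linear (killing br x)" for x y
    using kb unfolding bilinear_def by auto
  have lin: "linear P" unfolding P_def
    by (rule linear_compose_sum) (simp add: linear_iff bilinear_ladd[OF kb] bilinear_lmul[OF kb] algebra_simps)
  have Pv: "P v \<in> h" for v unfolding P_def
    by (rule subspace_sum[OF hsub]) (simp add: e(1) hsub subspace_scale subspace_neg)
  have o: "killing br (v - P v) (e j) = 0" if "j < dim h" for v j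
  proof -
    have "killing br (P v) (e j) = (\<Sum>i<dim h. ?q v (e i) * killing br (e i) (e j))"
      unfolding P_def by (simp add: linear_sum[OF lq] bilinear_lmul[OF kb] bilinear_lneg[OF kb])
    also have "\<dots> = (\<Sum>i<dim h. if i = j then killing br v (e j) else 0)"
    proof (rule sum.cong)
      fix i assume "i \<in> {..<dim h}"
      thus "?q v (e i) * killing br (e i) (e j) = (if i = j then killing br v (e j) else 0)"
        using e(2)[rule_format, of i j] that by auto
    qed simp
    also have "\<dots> = killing br v (e j)" using that by simp
    finally show ?thesis by (simp add: bilinear_lsub[OF kb])
  qed
  have "v - P v \<in> m_of br h" for v
  proof -
    have "killing br (v - P v) z = 0" if z: "z \<in> h" for z
    proof -
      have "killing br (v - P v) z = killing br (v - P v) (\<Sum>i<dim h. ?q z (e i) *\<^sub>R e i)"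
        using e(3) z by metis
      also have "\<dots> = 0" by (simp add: linear_sum[OF rq] bilinear_rmul[OF kb] bilinear_rneg[OF kb] o)
      finally show ?thesis .
    qed
    thus ?thesis by (simp add: m_of_def)
  qed
  thus ?thesis using lin Pv by blast
qed

lemma Ph: "linear Ph" "Ph v \<in> h" "v - Ph v \<in> m_of br h"
  using someI_ex[OF Ph_ex] unfolding Ph_def[symmetric] by auto

lemma pm_unique: "x \<in> m_of br h \<Longrightarrow> v - x \<in> h \<Longrightarrow> proj_m br h v = x"
  unfolding proj_m_def
proof (rule the_equality)
  fix y assume x: "x \<in> m_of br h" "v - x \<in> h" and y: "y \<in> m_of br h \<and> v - y \<in> h"
  have "x - y \<in> h" using subspace_diff[OF hsub y[THEN conjunct2] x(2)] by simp
  moreover have "x - y \<in> m_of br h" using subspace_diff[OF msub x(1) y[THEN conjunct1]] .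
  ultimately show "y = x" using hm0 by fastforce
qed auto

lemma pm_eq: "proj_m br h v = v - Ph v"
  by (rule pm_unique) (use Ph in auto)

lemma pm_m: "proj_m br h v \<in> m_of br h" using pm_eq Ph by simp
lemma pm_h: "v - proj_m br h v \<in> h" using pm_eq Ph by simp
lemma pm_lin: "linear (proj_m br h)"
proof -
  have "linear (\<lambda>v. v - Ph v)" using Ph(1) by (simp add: linear_compose_sub linear_id[unfolded id_def])
  thus ?thesis using pm_eq by presburger
qed
lemma pm_of_h: "z \<in> h \<Longrightarrow> proj_m br h z = 0"
  by (rule pm_unique) (auto simp: subspace_0[OF msub])
lemma pm_of_m: "x \<in> m_of br h \<Longrightarrow> proj_m br h x = x"
  by (rule pm_unique) (auto simp: subspace_0[OF hsub])
lemma pm_br: "z \<in> h \<Longrightarrow> proj_m br h (br z v) = br z (proj_m br h v)"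
proof (rule pm_unique)
  assume z: "z \<in> h"
  show "br z (proj_m br h v) \<in> m_of br h" using hm[OF z pm_m] .
  have "br z v - br z (proj_m br h v) = br z (v - proj_m br h v)" by (simp add: bilinear_rsub[OF bb])
  thus "br z v - br z (proj_m br h v) \<in> h" using hh[OF z pm_h] by simp
qed

lemma abel_m:
  assumes x: "x \<in> m_of br h" and y: "y \<in> m_of br h"
  shows "br (J x) (J y) = br x y"
proof -
  let ?d = "br (J x) (J y) - br x y"
  have dh: "?d \<in> h" using mm[OF Jm[OF x] Jm[OF y]] mm[OF x y] hsub by (simp add: subspace_diff)
  have "killing br ?d z = 0" if z: "z \<in> h" for z
  proof -
    have "killing br (br (J x) (J y)) z = killing br (J x) (br (J y) z)" by (rule ki)
    also have "br (J y) z = - J (br z y)" using Jcomm[OF z y] sk[of "J y" z] by simp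
    also have "killing br (J x) (- J (br z y)) = - killing br x (br z y)"
      using Jorth[OF x hm[OF z y]] by (simp add: bilinear_rneg[OF kb])
    also have "br z y = - br y z" by (rule sk)
    also have "- killing br x (- br y z) = killing br (br x y) z"
      by (simp add: bilinear_rneg[OF kb] ki)
    finally show ?thesis by (simp add: bilinear_lsub[OF kb])
  qed
  hence "?d \<in> m_of br h" by (simp add: m_of_def)
  thus ?thesis using hm0[OF dh] by simp
qed

lemma abel_m2:
  assumes x: "x \<in> m_of br h" and y: "y \<in> m_of br h"
  shows "br (J x) y + br x (J y) = 0"
proof -
  have "br (J x) (J (J y)) = br x (J y)" using abel_m[OF x Jm[OF y]] .
  hence "br x (J y) = - br (J x) y" using JJ[OF y] by (simp add: bilinear_rneg[OF bb])
  thus ?thesis by simp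
qed


lemma nip_split:
  "nip br u w = fst u * fst w - killing br (snd u - proj_m br h (snd u)) (snd w - proj_m br h (snd w))
     - killing br (proj_m br h (snd u)) (proj_m br h (snd w))"
proof -
  let ?hu = "snd u - proj_m br h (snd u)" and ?xu = "proj_m br h (snd u)"
  let ?hw = "snd w - proj_m br h (snd w)" and ?xw = "proj_m br h (snd w)"
  have e1: "snd u = ?hu + ?xu" "snd w = ?hw + ?xw" by simp_all
  have "killing br (snd u) (snd w) = killing br (?hu + ?xu) (?hw + ?xw)" using e1 by metis
  also have "\<dots> = killing br ?hu ?hw + killing br ?hu ?xw + killing br ?xu ?hw + killing br ?xu ?xw"
    by (simp only: bilinear_ladd[OF kb] bilinear_radd[OF kb] add.assoc)
  also have "killing br ?hu ?xw = 0" using mdef'[OF pm_m pm_h] .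
  also have "killing br ?xu ?hw = 0" using mdef[OF pm_m pm_h] .
  finally show ?thesis by (simp add: nip_def)
qed

lemma decomp:
  assumes "u \<in> Vs s"
  shows "(fst u, snd u - proj_m br h (snd u)) \<in> Hs h s"
    "u = (fst u, snd u - proj_m br h (snd u)) + (0, proj_m br h (snd u))"
  using assms pm_h by (auto simp: Hs_def Vs_def)

lemma Jc_props:
  assumes A: "adapted_cs br h J s Jc" and u: "u \<in> Vs s"
  shows "Jc u \<in> Vs s" "proj_m br h (snd (Jc u)) = J (proj_m br h (snd u))"
    "Jc (Jc u) = - u"
    "fst (Jc u) = fst (Jc (fst u, snd u - proj_m br h (snd u)))"
    "snd (Jc u) - proj_m br h (snd (Jc u)) = snd (Jc (fst u, snd u - proj_m br h (snd u)))"
proof -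
  let ?a = "(fst u, snd u - proj_m br h (snd u))" and ?x = "proj_m br h (snd u)"
  have lin: "linear Jc" and Jm': "\<And>x. x \<in> m_of br h \<Longrightarrow> Jc (0, x) = (0, J x)"
    and JH: "\<And>u. u \<in> Hs h s \<Longrightarrow> Jc u \<in> Hs h s \<and> Jc (Jc u) = - u"
    using A by (auto simp: adapted_cs_def)
  have aH: "?a \<in> Hs h s" using decomp[OF u] by simp
  have eq: "Jc u = Jc ?a + (0, J ?x)"
    using decomp(2)[OF u] linear_add[OF lin, of ?a "(0, ?x)"] Jm'[OF pm_m] by metis
  have JaH: "Jc ?a \<in> Hs h s" using JH[OF aH] by simp
  hence sJa: "snd (Jc ?a) \<in> h" and fJa: "s = 0 \<longrightarrow> fst (Jc ?a) = 0" by (auto simp: Hs_def Vs_def)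
  show "Jc u \<in> Vs s" using eq fJa by (simp add: Vs_def)
  have pmJ: "proj_m br h (snd (Jc u)) = J ?x"
    by (rule pm_unique) (use eq sJa Jm[OF pm_m] in auto)
  thus "proj_m br h (snd (Jc u)) = J (proj_m br h (snd u))" .
  show "fst (Jc u) = fst (Jc ?a)" using eq by simp
  show "snd (Jc u) - proj_m br h (snd (Jc u)) = snd (Jc ?a)" using eq pmJ by simp
  have "Jc (Jc u) = Jc (Jc ?a) + Jc (0, J ?x)" using eq linear_add[OF lin] by metis
  also have "\<dots> = - ?a + (0, - ?x)" using JH[OF aH] Jm'[OF Jm[OF pm_m]] JJ[OF pm_m] by simp
  also have "\<dots> = - u" by (simp add: prod_eq_iff)
  finally show "Jc (Jc u) = - u" .
qed

lemma nbr_Jc: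
  assumes A: "adapted_cs br h J s Jc" and u: "u \<in> Vs s" and w: "w \<in> Vs s"
  shows "nbr br h (Jc u) (Jc w) = nbr br h u w"
  using abel_m[OF pm_m pm_m] by (simp add: nbr_def Jc_props[OF A u] Jc_props[OF A w])

lemma nij_Jc:
  assumes A: "adapted_cs br h J s Jc" and u: "u \<in> Vs s" and w: "w \<in> Vs s"
  shows "nijenhuis (nbr br h) Jc u w = 0"
proof -
  have lin: "linear Jc" using A by (simp add: adapted_cs_def)
  have "nbr br h (Jc u) w + nbr br h u (Jc w) = 0"
    using abel_m2[OF pm_m pm_m] by (simp add: nbr_def Jc_props[OF A u] Jc_props[OF A w] zero_prod_def)
  hence "Jc (nbr br h (Jc u) w) + Jc (nbr br h u (Jc w)) = 0"
    using linear_add[OF lin] linear_0[OF lin] by metis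
  moreover have "\<And>X a b :: real \<times> 'g. X - a - b - X = - (a + b)" by (simp add: algebra_simps)
  ultimately show ?thesis unfolding nijenhuis_def nbr_Jc[OF A u w] by (metis neg_equal_0_iff_equal)
qed

lemma herm_Jc:
  assumes A: "adapted_cs br h J s Jc" and u: "u \<in> Vs s" and w: "w \<in> Vs s"
  shows "nip br (Jc u) (Jc w) = nip br u w"
proof -
  have o: "\<And>u w. u \<in> Hs h s \<Longrightarrow> w \<in> Hs h s \<Longrightarrow> nip br (Jc u) (Jc w) = nip br u w"
    using A by (simp add: adapted_cs_def)
  have "nip br (Jc (fst u, snd u - proj_m br h (snd u))) (Jc (fst w, snd w - proj_m br h (snd w)))
     = nip br (fst u, snd u - proj_m br h (snd u)) (fst w, snd w - proj_m br h (snd w))"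
    by (rule o) (use decomp u w in auto)
  thus ?thesis
    unfolding nip_split[of "Jc u"] nip_split[of u] Jc_props(4,5)[OF A u] Jc_props(4,5)[OF A w]
    unfolding Jc_props(2)[OF A u] Jc_props(2)[OF A w]
    by (simp add: nip_def Jorth[OF pm_m pm_m])
qed


lemma kskew: "killing br (br z a) b + killing br a (br z b) = 0"
proof -
  have "killing br (br z a) b = killing br (- br a z) b" using sk[of z a] by simp
  also have "\<dots> = - killing br a (br z b)" by (simp add: bilinear_lneg[OF kb] ki)
  finally show ?thesis by simp
qed

lemma br0: "br 0 x = 0" "br x 0 = 0"
  using bilinear_lzero[OF bb] bilinear_rzero[OF bb] by auto

lemma k0: "killing br 0 x = 0" "killing br x 0 = 0"
  using bilinear_lzero[OF kb] bilinear_rzero[OF kb] by auto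

lemma nip_nbr:
  "nip br (nbr br h u v) w = - killing br (br (proj_m br h (snd u)) (proj_m br h (snd v)))
                                    (snd w - proj_m br h (snd w))"
proof -
  let ?c = "br (proj_m br h (snd u)) (proj_m br h (snd v))"
  have ch: "?c \<in> h" by (rule mm[OF pm_m pm_m])
  have "snd w = (snd w - proj_m br h (snd w)) + proj_m br h (snd w)" by simp
  hence "killing br ?c (snd w) = killing br ?c (snd w - proj_m br h (snd w)) + killing br ?c (proj_m br h (snd w))"
    by (metis bilinear_radd[OF kb])
  also have "killing br ?c (proj_m br h (snd w)) = 0" using mdef'[OF pm_m ch] .
  finally show ?thesis by (simp add: nip_def nbr_def)
qed

lemma tors:
  assumes A: "adapted_cs br h J s Jc" and u: "u \<in> Vs s" and v: "v \<in> Vs s" and w: "w \<in> Vs s"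
  shows "torsion3 (nbr br h) (nip br) Jc u v w =
    killing br (br (proj_m br h (snd u)) (proj_m br h (snd v))) (snd w - proj_m br h (snd w)) +
    killing br (br (proj_m br h (snd v)) (proj_m br h (snd w))) (snd u - proj_m br h (snd u)) +
    killing br (br (proj_m br h (snd w)) (proj_m br h (snd u))) (snd v - proj_m br h (snd v))"
  unfolding torsion3_def nbr_Jc[OF A u v] nbr_Jc[OF A v w] nbr_Jc[OF A w u] nip_nbr by simp

lemma nbrV: "nbr br h u v \<in> Vs s" by (simp add: nbr_def Vs_def)

lemma tors_nbr:
  assumes A: "adapted_cs br h J s Jc" and a: "a \<in> Vs s" and b: "b \<in> Vs s"
    and v: "v \<in> Vs s" and w: "w \<in> Vs s"
  shows "torsion3 (nbr br h) (nip br) Jc (nbr br h a b) v w =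
    killing br (br (proj_m br h (snd v)) (proj_m br h (snd w))) (br (proj_m br h (snd a)) (proj_m br h (snd b)))"
proof -
  have p0: "proj_m br h (snd (nbr br h a b)) = 0"
    unfolding nbr_def by (simp add: pm_of_h mm[OF pm_m pm_m])
  show ?thesis unfolding tors[OF A nbrV v w] p0 by (simp add: br0 k0 nbr_def)
qed

lemma jac_identity:
  "- killing br (br c d) (br a b) + killing br (br b d) (br a c) - killing br (br b c) (br a d)
   - killing br (br a d) (br b c) + killing br (br a c) (br b d) - killing br (br a b) (br c d) = 0"
proof -
  have j0: "br b (br c d) + br c (br d b) + br d (br b c) = 0" using la by (simp add: lie_algebra_def)
  have "br c (br d b) = - br c (br b d)" using sk[of d b] by (simp add: bilinear_rneg[OF bb])
  hence j: "br b (br c d) - br c (br b d) + br d (br b c) = 0" using j0 by simp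
  have "killing br a (br b (br c d) - br c (br b d) + br d (br b c)) = 0" using j k0 by simp
  hence e: "killing br a (br b (br c d)) - killing br a (br c (br b d)) + killing br a (br d (br b c)) = 0"
    by (simp add: bilinear_radd[OF kb] bilinear_rsub[OF kb])
  have t1: "killing br (br c d) (br a b) = killing br a (br b (br c d))" using ks ki by metis
  have t2: "killing br (br b d) (br a c) = killing br a (br c (br b d))" using ks ki by metis
  have t3: "killing br (br b c) (br a d) = killing br a (br d (br b c))" using ks ki by metis
  have t4: "killing br (br a d) (br b c) = killing br a (br d (br b c))" using ki by metis
  have t5: "killing br (br a c) (br b d) = killing br a (br c (br b d))" using ki by metis
  have t6: "killing br (br a b) (br c d) = killing br a (br b (br c d))" using ki by metis
  show ?thesis unfolding t1 t2 t3 t4 t5 t6 using e by linarith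
qed

lemma pluri:
  assumes A: "adapted_cs br h J s Jc"
  shows "pluriclosed (Vs s) (nbr br h) (nip br) Jc"
  unfolding pluriclosed_def ce_d3_def
proof (intro ballI)
  fix x0 x1 x2 x3 :: "real \<times> 'g" assume V: "x0 \<in> Vs s" "x1 \<in> Vs s" "x2 \<in> Vs s" "x3 \<in> Vs s"
  show "- torsion3 (nbr br h) (nip br) Jc (nbr br h x0 x1) x2 x3 +
          torsion3 (nbr br h) (nip br) Jc (nbr br h x0 x2) x1 x3 -
          torsion3 (nbr br h) (nip br) Jc (nbr br h x0 x3) x1 x2 -
          torsion3 (nbr br h) (nip br) Jc (nbr br h x1 x2) x0 x3 +
          torsion3 (nbr br h) (nip br) Jc (nbr br h x1 x3) x0 x2 -
          torsion3 (nbr br h) (nip br) Jc (nbr br h x2 x3) x0 x1 = 0"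
    unfolding tors_nbr[OF A V(1) V(2) V(3) V(4)] tors_nbr[OF A V(1) V(3) V(2) V(4)]
      tors_nbr[OF A V(1) V(4) V(2) V(3)] tors_nbr[OF A V(2) V(3) V(1) V(4)]
      tors_nbr[OF A V(2) V(4) V(1) V(3)] tors_nbr[OF A V(3) V(4) V(1) V(2)]
    by (rule jac_identity)
qed


definition Dz :: "'g \<Rightarrow> real \<times> 'g \<Rightarrow> real \<times> 'g" where
  "Dz z = (\<lambda>u. (0, br z (snd u)))"

definition hpart :: "'g \<Rightarrow> 'g" where "hpart v = v - proj_m br h v"

lemma hpart_h: "hpart v \<in> h" unfolding hpart_def by (rule pm_h)

lemma hpart_lin: "hpart (c *\<^sub>R x + y) = c *\<^sub>R hpart x + hpart y"
  unfolding hpart_def using linear_add[OF pm_lin] linear_scale[OF pm_lin] by (simp add: algebra_simps)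

lemma Dz_skew:
  assumes z: "z \<in> h" shows "skew_derivation (Vs s) (nbr br h) (nip br) (Dz z)"
  unfolding skew_derivation_def
proof (intro conjI ballI)
  show "linear (Dz z)" unfolding Dz_def linear_iff
    by (simp add: bilinear_radd[OF bb] bilinear_rmul[OF bb])
  fix u :: "real \<times> 'g" assume "u \<in> Vs s"
  show "Dz z u \<in> Vs s" by (simp add: Dz_def Vs_def)
  fix w :: "real \<times> 'g" assume "w \<in> Vs s"
  show "Dz z (nbr br h u w) = nbr br h (Dz z u) w + nbr br h u (Dz z w)"
    unfolding Dz_def nbr_def using pm_br[OF z, of "snd u"] pm_br[OF z, of "snd w"]
    by (simp add: ad)
  show "nip br (Dz z u) w + nip br u (Dz z w) = 0"
    unfolding Dz_def nip_def using kskew[of z "snd u" "snd w"] by simp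
qed

lemma nat_red: "naturally_reductive (Vs s) (nbr br h) (nip br)"
  unfolding naturally_reductive_def
proof (intro exI conjI)
  let ?K = "{D. \<exists>z\<in>h. D = Dz z}"
  let ?phi = "\<lambda>X. Dz (hpart (snd X))"
  show "\<forall>D\<in>?K. skew_derivation (Vs s) (nbr br h) (nip br) D" using Dz_skew by blast
  show "\<exists>F\<in>?K. \<forall>u\<in>Vs s. F u = 0"
  proof (rule bexI[of _ "Dz 0"])
    show "Dz 0 \<in> ?K" using subspace_0[OF hsub] by blast
    show "\<forall>u\<in>Vs s. Dz 0 u = 0" by (simp add: Dz_def br0 zero_prod_def)
  qed
  show "\<forall>D\<in>?K. \<forall>E\<in>?K. \<forall>c::real. \<exists>F\<in>?K. \<forall>u\<in>Vs s. F u = c *\<^sub>R D u + E u"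
  proof (intro ballI allI)
    fix D E c assume "D \<in> ?K" "E \<in> ?K"
    then obtain a b where ab: "a \<in> h" "b \<in> h" "D = Dz a" "E = Dz b" by blast
    show "\<exists>F\<in>?K. \<forall>u\<in>Vs s. F u = c *\<^sub>R D u + E u"
    proof (rule bexI[of _ "Dz (c *\<^sub>R a + b)"])
      show "Dz (c *\<^sub>R a + b) \<in> ?K" using ab hsub by (metis (mono_tags, lifting) mem_Collect_eq subspace_add subspace_scale)
      show "\<forall>u\<in>Vs s. Dz (c *\<^sub>R a + b) u = c *\<^sub>R D u + E u"
        using ab by (simp add: Dz_def bilinear_ladd[OF bb] bilinear_lmul[OF bb])
    qed
  qed
  show "\<forall>D\<in>?K. \<forall>E\<in>?K. \<exists>F\<in>?K. \<forall>u\<in>Vs s. F u = D (E u) - E (D u)"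
  proof (intro ballI allI)
    fix D E assume "D \<in> ?K" "E \<in> ?K"
    then obtain a b where ab: "a \<in> h" "b \<in> h" "D = Dz a" "E = Dz b" by blast
    show "\<exists>F\<in>?K. \<forall>u\<in>Vs s. F u = D (E u) - E (D u)"
    proof (rule bexI[of _ "Dz (br a b)"])
      show "Dz (br a b) \<in> ?K" using ab hh by blast
      show "\<forall>u\<in>Vs s. Dz (br a b) u = D (E u) - E (D u)" using ab by (simp add: Dz_def ad)
    qed
  qed
  show "\<forall>X\<in>Vs s. ?phi X \<in> ?K" using hpart_h by blast
  show "\<forall>X\<in>Vs s. \<forall>Y\<in>Vs s. \<forall>c::real. \<forall>u\<in>Vs s. ?phi (c *\<^sub>R X + Y) u = c *\<^sub>R ?phi X u + ?phi Y u"
    by (simp add: Dz_def hpart_lin bilinear_ladd[OF bb] bilinear_lmul[OF bb])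
  show "\<forall>D\<in>?K. \<forall>X\<in>Vs s. \<forall>u\<in>Vs s. D (?phi X u) - ?phi X (D u) = ?phi (D X) u"
  proof (intro ballI)
    fix D and X u :: "real \<times> 'g" assume "D \<in> ?K"
    then obtain a where a: "a \<in> h" "D = Dz a" by blast
    have "hpart (br a (snd X)) = br a (hpart (snd X))"
      unfolding hpart_def pm_br[OF a(1)] by (simp add: bilinear_rsub[OF bb])
    thus "D (?phi X u) - ?phi X (D u) = ?phi (D X) u"
      using a by (simp add: Dz_def ad)
  qed
  show "\<forall>X\<in>Vs s. \<forall>Y\<in>Vs s. \<forall>Z\<in>Vs s.
          nip br (?phi X Y - ?phi Y X + nbr br h X Y) Z + nip br Y (?phi X Z - ?phi Z X + nbr br h X Z) = 0"
  proof (intro ballI)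
    fix X Y Z :: "real \<times> 'g"
    define a where "a = hpart (snd X)"
    define b where "b = hpart (snd Y)"
    define c where "c = hpart (snd Z)"
    define x where "x = proj_m br h (snd X)"
    define y where "y = proj_m br h (snd Y)"
    define z where "z = proj_m br h (snd Z)"
    have sX: "snd X = a + x" and sY: "snd Y = b + y" and sZ: "snd Z = c + z"
      by (simp_all add: a_def b_def c_def x_def y_def z_def hpart_def)
    have hs: "a \<in> h" "b \<in> h" "c \<in> h" using hpart_h by (simp_all add: a_def b_def c_def)
    have ms: "x \<in> m_of br h" "y \<in> m_of br h" "z \<in> m_of br h" using pm_m by (simp_all add: x_def y_def z_def)
    have E: "br a (b + y) - br b (a + x) + br x y = br (a + x) (b + y) + br a b" for a b x y
    proof -
      have "br b a = - br a b" "br b x = - br x b" using sk[of b a] sk[of b x] by auto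
      moreover have "br a (b + y) = br a b + br a y" by (rule bilinear_radd[OF bb])
      moreover have "br b (a + x) = br b a + br b x" by (rule bilinear_radd[OF bb])
      moreover have "br (a + x) (b + y) = br a b + br a y + (br x b + br x y)"
        by (simp only: bilinear_ladd[OF bb] bilinear_radd[OF bb] add_ac)
      ultimately show ?thesis by (simp add: algebra_simps)
    qed
    have EY: "br a (snd Y) - br b (snd X) + br x y = br (snd X) (snd Y) + br a b"
      unfolding sX sY by (rule E)
    have EZ: "br a (snd Z) - br c (snd X) + br x z = br (snd X) (snd Z) + br a c"
      unfolding sX sZ by (rule E)
    have L0: "nip br (?phi X Y - ?phi Y X + nbr br h X Y) Z =
        - killing br (br a (snd Y) - br b (snd X) + br x y) (snd Z)"
      by (simp add: nip_def Dz_def nbr_def a_def b_def x_def y_def)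
    have R0: "nip br Y (?phi X Z - ?phi Z X + nbr br h X Z) =
        - killing br (snd Y) (br a (snd Z) - br c (snd X) + br x z)"
      by (simp add: nip_def Dz_def nbr_def a_def c_def x_def z_def)
    have L: "nip br (?phi X Y - ?phi Y X + nbr br h X Y) Z =
        - killing br (br (snd X) (snd Y) + br a b) (snd Z)"
      unfolding L0 EY ..
    have R: "nip br Y (?phi X Z - ?phi Z X + nbr br h X Z) =
        - killing br (snd Y) (br (snd X) (snd Z) + br a c)"
      unfolding R0 EZ ..
    have k1: "killing br (br (snd X) (snd Y)) (snd Z) + killing br (snd Y) (br (snd X) (snd Z)) = 0"
      by (rule kskew)
    have k2: "killing br (br a b) c + killing br b (br a c) = 0" by (rule kskew)
    have k3: "killing br (br a b) z = 0" using mdef'[OF ms(3) hh[OF hs(1,2)]] .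
    have k4: "killing br y (br a c) = 0" using mdef[OF ms(2) hh[OF hs(1,3)]] .
    show "nip br (?phi X Y - ?phi Y X + nbr br h X Y) Z + nip br Y (?phi X Z - ?phi Z X + nbr br h X Z) = 0"
    proof -
      have "killing br (br (snd X) (snd Y) + br a b) (snd Z) + killing br (snd Y) (br (snd X) (snd Z) + br a c)
        = (killing br (br (snd X) (snd Y)) (snd Z) + killing br (snd Y) (br (snd X) (snd Z)))
          + killing br (br a b) (snd Z) + killing br (snd Y) (br a c)"
        by (simp add: bilinear_ladd[OF kb] bilinear_radd[OF kb])
      also have "killing br (br a b) (snd Z) = killing br (br a b) c + killing br (br a b) z"
        unfolding sZ by (rule bilinear_radd[OF kb])
      also have "killing br (snd Y) (br a c) = killing br b (br a c) + killing br y (br a c)"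
        unfolding sY by (rule bilinear_ladd[OF kb])
      finally have "killing br (br (snd X) (snd Y) + br a b) (snd Z) + killing br (snd Y) (br (snd X) (snd Z) + br a c) = 0"
        using k1 k2 k3 k4 by linarith
      thus ?thesis unfolding L R by linarith
    qed
  qed
qed


lemma nip_pd: "posdef (nip br) W"
proof -
  have "bilinear (nip br)"
    unfolding bilinear_def linear_iff nip_def
    by (simp add: bilinear_ladd[OF kb] bilinear_radd[OF kb] bilinear_lmul[OF kb] bilinear_rmul[OF kb] algebra_simps)
  moreover have "nip br x y = nip br y x" for x y unfolding nip_def using ks by (simp add: mult.commute)
  moreover have "nip br x x > 0" if "x \<noteq> 0" for x
  proof (cases "snd x = 0")
    case True
    hence "fst x \<noteq> 0" using that by (simp add: prod_eq_iff)
    hence "fst x * fst x > 0" using not_real_square_gt_zero by blast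
    thus ?thesis using True by (simp add: nip_def k0)
  next
    case False
    have "fst x * fst x \<ge> 0" by simp
    thus ?thesis using kneg[OF False] unfolding nip_def by linarith
  qed
  ultimately show ?thesis unfolding posdef_def by blast
qed

lemma Hs_sub: "subspace (Hs h s)"
  unfolding subspace_def Hs_def Vs_def using hsub by (auto simp: subspace_def)

lemma Hs_dim:
  assumes "s \<in> {0, 1}" shows "dim (Hs h s) = s + dim h"
proof (cases "s = 0")
  case True
  hence "Hs h s = {0} \<times> h" by (auto simp: Hs_def Vs_def)
  thus ?thesis using True dim_Times[OF subspace_single_0 hsub] by simp
next
  case False
  hence s1: "s = 1" using assms by simp
  hence "Hs h s = UNIV \<times> h" by (auto simp: Hs_def Vs_def)
  thus ?thesis using s1 dim_Times[OF subspace_UNIV[where 'a=real] hsub] by simp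
qed

lemma adapted_ex:
  assumes "s \<in> {0, 1}" and "dim h mod 2 = s"
  shows "\<exists>Jc. adapted_cs br h J s Jc"
proof -
  have "dim (Hs h s) = 2 * ((s + dim h) div 2)" using Hs_dim[OF assms(1)] assms by presburger
  then obtain L where L: "linear L" "\<forall>x. L x \<in> Hs h s" "\<forall>x\<in>Hs h s. L (L x) = - x"
     "\<forall>x\<in>Hs h s. \<forall>y\<in>Hs h s. nip br (L x) (L y) = nip br x y"
    using complex_str[OF nip_pd Hs_sub] by blast
  define Pr where "Pr = (\<lambda>u::real \<times> 'g. (if s = 0 then 0 else fst u, snd u - proj_m br h (snd u)))"
  have linPr: "linear Pr" unfolding Pr_def linear_iff
    using linear_add[OF pm_lin] linear_scale[OF pm_lin] by (simp add: algebra_simps)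
  define Jc where "Jc = (\<lambda>u. L (Pr u) + (0, J (snd u)))"
  have linJc: "linear Jc" unfolding Jc_def linear_iff
    using linear_add[OF L(1)] linear_scale[OF L(1)] linear_add[OF linPr] linear_scale[OF linPr]
      linear_add[OF Jlin] linear_scale[OF Jlin] by (simp add: scaleR_add_right)
  have PrH: "Pr u = u" if "u \<in> Hs h s" for u
    using that pm_of_h by (auto simp: Pr_def Hs_def Vs_def prod_eq_iff)
  have JcH: "Jc u = L u" if "u \<in> Hs h s" for u
    using that PrH[OF that] Jh by (auto simp: Jc_def Hs_def zero_prod_def)
  have "adapted_cs br h J s Jc"
    unfolding adapted_cs_def
  proof (intro conjI ballI)
    show "linear Jc" by (rule linJc)
    fix x assume x: "x \<in> m_of br h"
    have "Pr (0, x) = 0" using pm_of_m[OF x] by (simp add: Pr_def zero_prod_def)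
    thus "Jc (0, x) = (0, J x)" using linear_0[OF L(1)] by (simp add: Jc_def)
  next
    fix u assume u: "u \<in> Hs h s"
    show "Jc u \<in> Hs h s" using JcH[OF u] L(2) by metis
    show "Jc (Jc u) = - u" using JcH[OF u] JcH[OF L(2)[rule_format, of u]] L(3) u by simp
    fix w assume w: "w \<in> Hs h s"
    show "nip br (Jc u) (Jc w) = nip br u w" using JcH[OF u] JcH[OF w] L(4) u w by simp
  qed
  thus ?thesis by blast
qed

end

theorem mainTheorem18:
  fixes br :: "'g::euclidean_space \<Rightarrow> 'g \<Rightarrow> 'g"
    and h :: "'g set" and J :: "'g \<Rightarrow> 'g" and s :: nat
  assumes "compact_semisimple br"
    and "hermitian_symmetric_pair br h J"
    and "irreducible_pair br h"
    and "s \<in> {0, 1}"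
    and "dim h mod 2 = s"
  shows "(\<exists>Jc. adapted_cs br h J s Jc) \<and>
         (\<forall>Jc. adapted_cs br h J s Jc \<longrightarrow>
             abelian_cs (Vs s) (nbr br h) Jc \<and>
             hermitian_metric (Vs s) (nip br) Jc \<and>
             pluriclosed (Vs s) (nbr br h) (nip br) Jc) \<and>
         naturally_reductive (Vs s) (nbr br h) (nip br)"
proof (intro conjI allI impI)
  note cs = assms(1) and hp = assms(2)
  show "\<exists>Jc. adapted_cs br h J s Jc" using adapted_ex[OF cs hp assms(4,5)] .
  show "naturally_reductive (Vs s) (nbr br h) (nip br)" using nat_red[OF cs hp] .
  fix Jc assume A: "adapted_cs br h J s Jc"
  show "hermitian_metric (Vs s) (nip br) Jc"
    unfolding hermitian_metric_def using herm_Jc[OF cs hp A] by blast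
  show "pluriclosed (Vs s) (nbr br h) (nip br) Jc" using pluri[OF cs hp A] .
  show "abelian_cs (Vs s) (nbr br h) Jc"
    unfolding abelian_cs_def complex_structure_def
    using A Jc_props[OF cs hp A] nij_Jc[OF cs hp A] nbr_Jc[OF cs hp A]
    by (simp add: adapted_cs_def)
qed

end
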